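(* Let $\mathbb{X}$ be a reflexive Kadets-Klee real Banach space and $\mathbb{Y}$ a smooth real Banach space (both of dimension greater than $1$). Let $T\in\mathbb{K}(\mathbb{X},\mathbb{Y})$ be nonzero. Then $T$ is a smooth point of $\mathbb{K}(\mathbb{X},\mathbb{Y})$ if and only if there exists $x_0\in S_{\mathbb{X}}$ such that for every $\epsilon>0$ there exists $\delta(\epsilon)>0$ such that for every $0<\delta\le\delta(\epsilon)$ (with $\delta<\|T\|$), \[M_T(\delta)\subseteq B(x_0,\epsilon)\cup B(-x_0,\epsilon).\] Moreover, the "if" direction holds without assuming that $\mathbb{X}$ is Kadets-Klee.
   Context: $\mathbb{K}(\mathbb{X},\mathbb{Y})$ is the Banach space of compact linear operators from $\mathbb{X}$ to $\mathbb{Y}$ with the operator norm. $S_{\mathbb{X}}$ is the unit sphere; $B(x,r)$ is the open ball of centre $x$ and radius $r$. A nonzero element $x$ of a Banach space $\mathbb{Z}$ is a smooth point if there is a unique $f\in\mathbb{Z}^*$ with $\|f\|=1$ and $f(x)=\|x\|$; a Banach space is smooth if every nonzero point is smooth. $\mathbb{X}$ is Kadets-Klee if whenever $x_n\to x$ weakly and $\|x_n\|\to\|x\|$, then $\|x_n-x\|\to0$. For nonzero $T$ and $0<\delta<\|T\|$, $M_T(\delta)=\{x\in S_{\mathbb{X}}:\|Tx\|>\|T\|-\delta\}$. *)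

theory Defs
  imports "HOL-Analysis.Analysis"
begin

definition support_functional_on :: "'c::real_normed_vector set \<Rightarrow> 'c \<Rightarrow> ('c \<Rightarrow> real) \<Rightarrow> bool" where
  "support_functional_on Z x f \<longleftrightarrow>
     (\<forall>u\<in>Z. \<forall>v\<in>Z. f (u + v) = f u + f v) \<and>
     (\<forall>c. \<forall>u\<in>Z. f (c *\<^sub>R u) = c * f u) \<and>
     (\<forall>u\<in>Z. \<bar>f u\<bar> \<le> norm u) \<and>
     f x = norm x"

definition smooth_point_in :: "'c::real_normed_vector set \<Rightarrow> 'c \<Rightarrow> bool" where
  "smooth_point_in Z x \<longleftrightarrow> x \<in> Z \<and> x \<noteq> 0 \<and>
     (\<exists>f. support_functional_on Z x f) \<and>
     (\<forall>f g. support_functional_on Z x f \<and> support_functional_on Z x g \<longrightarrow> (\<forall>z\<in>Z. f z = g z))"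

definition smooth_space :: "'c::real_normed_vector itself \<Rightarrow> bool" where
  "smooth_space _ \<longleftrightarrow> (\<forall>y::'c. y \<noteq> 0 \<longrightarrow> smooth_point_in UNIV y)"

definition reflexive_space :: "'c::real_normed_vector itself \<Rightarrow> bool" where
  "reflexive_space _ \<longleftrightarrow>
     (\<forall>\<phi> :: ('c \<Rightarrow>\<^sub>L real) \<Rightarrow>\<^sub>L real. \<exists>x::'c. \<forall>f. blinfun_apply \<phi> f = blinfun_apply f x)"

definition weak_conv :: "(nat \<Rightarrow> 'c::real_normed_vector) \<Rightarrow> 'c \<Rightarrow> bool" where
  "weak_conv xs x \<longleftrightarrow> (\<forall>f :: 'c \<Rightarrow>\<^sub>L real. (\<lambda>n. blinfun_apply f (xs n)) \<longlonglongrightarrow> blinfun_apply f x)"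

definition kadets_klee :: "'c::real_normed_vector itself \<Rightarrow> bool" where
  "kadets_klee _ \<longleftrightarrow> (\<forall>(xs :: nat \<Rightarrow> 'c) x.
     weak_conv xs x \<and> (\<lambda>n. norm (xs n)) \<longlonglongrightarrow> norm x \<longrightarrow> (\<lambda>n. norm (xs n - x)) \<longlonglongrightarrow> 0)"

definition dim_gt_one :: "'c::real_vector itself \<Rightarrow> bool" where
  "dim_gt_one _ \<longleftrightarrow> \<not> (\<exists>e::'c. span {e} = UNIV)"

definition compact_ops :: "('a::real_normed_vector \<Rightarrow>\<^sub>L 'b::real_normed_vector) set" where
  "compact_ops = {T. compact (closure (blinfun_apply T ` cball 0 1))}"

definition M_set :: "('a::real_normed_vector \<Rightarrow>\<^sub>L 'b::real_normed_vector) \<Rightarrow> real \<Rightarrow> 'a set" where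
  "M_set T \<delta> = {x. norm x = 1 \<and> norm (blinfun_apply T x) > norm T - \<delta>}"

end

theory Submission
  imports Defs
begin


definition lsub :: "'v::real_vector set \<Rightarrow> bool" where
  "lsub W \<longleftrightarrow> 0 \<in> W \<and> (\<forall>u\<in>W. \<forall>v\<in>W. u + v \<in> W) \<and> (\<forall>c. \<forall>u\<in>W. c *\<^sub>R u \<in> W)"

definition lin_on :: "'v::real_vector set \<Rightarrow> ('v \<Rightarrow> real) \<Rightarrow> bool" where
  "lin_on W f \<longleftrightarrow> (\<forall>u\<in>W. \<forall>v\<in>W. f (u + v) = f u + f v) \<and> (\<forall>c. \<forall>u\<in>W. f (c *\<^sub>R u) = c * f u)"

definition dom_on :: "'v::real_normed_vector set \<Rightarrow> ('v \<Rightarrow> real) \<Rightarrow> bool" where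
  "dom_on W f \<longleftrightarrow> (\<forall>w\<in>W. f w \<le> norm w)"

lemma lsub_diff: "lsub W \<Longrightarrow> u \<in> W \<Longrightarrow> v \<in> W \<Longrightarrow> u - v \<in> W"
proof -
  assume a: "lsub W" "u \<in> W" "v \<in> W"
  then have "(-1) *\<^sub>R v \<in> W" unfolding lsub_def by blast
  then show ?thesis using a unfolding lsub_def by (metis scaleR_minus1_left diff_conv_add_uminus)
qed

lemma lin_on_diff: "lsub W \<Longrightarrow> lin_on W f \<Longrightarrow> u \<in> W \<Longrightarrow> v \<in> W \<Longrightarrow> f (u - v) = f u - f v"
proof -
  assume a: "lsub W" "lin_on W f" "u \<in> W" "v \<in> W"
  have m: "(-1) *\<^sub>R v \<in> W" using a unfolding lsub_def by blast
  have "f (u - v) = f (u + (-1) *\<^sub>R v)" by simp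
  also have "\<dots> = f u + f ((-1) *\<^sub>R v)" using a m unfolding lin_on_def by blast
  also have "f ((-1) *\<^sub>R v) = - f v" using a unfolding lin_on_def by (metis mult_minus1)
  finally show ?thesis by simp
qed

lemma dom_abs: "lsub W \<Longrightarrow> lin_on W f \<Longrightarrow> dom_on W f \<Longrightarrow> u \<in> W \<Longrightarrow> \<bar>f u\<bar> \<le> norm u"
proof -
  assume a: "lsub W" "lin_on W f" "dom_on W f" "u \<in> W"
  have m: "(-1) *\<^sub>R u \<in> W" using a unfolding lsub_def by blast
  have "f ((-1) *\<^sub>R u) = - f u" using a unfolding lin_on_def by (metis mult_minus1)
  moreover have "f ((-1) *\<^sub>R u) \<le> norm ((-1) *\<^sub>R u)" using a m unfolding dom_on_def by blast
  moreover have "f u \<le> norm u" using a unfolding dom_on_def by blast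
  ultimately show ?thesis by simp
qed

lemma one_step:
  fixes W :: "'v::real_normed_vector set"
  assumes W: "lsub W" and f: "lin_on W f" "dom_on W f" and z: "z \<notin> W"
    and c1: "\<forall>w\<in>W. f w + c \<le> norm (w + z)" and c2: "\<forall>w\<in>W. f w - c \<le> norm (w - z)"
  defines "W' \<equiv> {w + t *\<^sub>R z | w t. w \<in> W}"
  shows "lsub W' \<and> W \<subseteq> W' \<and> z \<in> W' \<and>
    (\<exists>G. lin_on W' G \<and> dom_on W' G \<and> (\<forall>w\<in>W. G w = f w) \<and> G z = c)"
proof -
  have uniq: "w1 = w2 \<and> t1 = t2" if "w1 \<in> W" "w2 \<in> W" "w1 + t1 *\<^sub>R z = w2 + t2 *\<^sub>R z" for w1 w2 t1 t2
  proof (cases "t1 = t2")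
    case True then show ?thesis using that by simp
  next
    case False
    have "(t1 - t2) *\<^sub>R z = w2 - w1" using that(3) by (simp add: algebra_simps)
    moreover have "z = (1 / (t1 - t2)) *\<^sub>R ((t1 - t2) *\<^sub>R z)" using False by simp
    ultimately have "z = (1 / (t1 - t2)) *\<^sub>R (w2 - w1)" by simp
    moreover have "w2 - w1 \<in> W" using lsub_diff[OF W that(2,1)] .
    ultimately have "z \<in> W" using W unfolding lsub_def by metis
    then show ?thesis using z by blast
  qed
  define G where "G v = (SOME a. \<exists>w t. w \<in> W \<and> v = w + t *\<^sub>R z \<and> a = f w + t * c)" for v
  have Geq: "G (w + t *\<^sub>R z) = f w + t * c" if "w \<in> W" for w t
  proof -
    have "\<exists>a. \<exists>w' t'. w' \<in> W \<and> w + t *\<^sub>R z = w' + t' *\<^sub>R z \<and> a = f w' + t' * c" using that by blast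
    then have "\<exists>w' t'. w' \<in> W \<and> w + t *\<^sub>R z = w' + t' *\<^sub>R z \<and> G (w + t *\<^sub>R z) = f w' + t' * c"
      unfolding G_def by (rule someI_ex)
    then obtain w' t' where "w' \<in> W" "w + t *\<^sub>R z = w' + t' *\<^sub>R z" "G (w + t *\<^sub>R z) = f w' + t' * c" by blast
    then show ?thesis using uniq[OF that] by metis
  qed
  have W0: "0 \<in> W" and Wa: "\<And>u v. u \<in> W \<Longrightarrow> v \<in> W \<Longrightarrow> u + v \<in> W"
    and Ws: "\<And>a u. u \<in> W \<Longrightarrow> a *\<^sub>R u \<in> W" using W unfolding lsub_def by blast+
  have fa: "\<And>u v. u \<in> W \<Longrightarrow> v \<in> W \<Longrightarrow> f (u + v) = f u + f v"
    and fs: "\<And>a u. u \<in> W \<Longrightarrow> f (a *\<^sub>R u) = a * f u" using f(1) unfolding lin_on_def by blast+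
  have fd: "\<And>u. u \<in> W \<Longrightarrow> f u \<le> norm u" using f(2) unfolding dom_on_def by blast
  have "lsub W'"
    unfolding lsub_def W'_def
  proof (intro conjI ballI allI)
    show "0 \<in> {w + t *\<^sub>R z |w t. w \<in> W}" using W0 by (metis (mono_tags, lifting) add.right_neutral mem_Collect_eq scale_zero_left)
  next
    fix u v assume "u \<in> {w + t *\<^sub>R z |w t. w \<in> W}" "v \<in> {w + t *\<^sub>R z |w t. w \<in> W}"
    then obtain w1 t1 w2 t2 where "u = w1 + t1 *\<^sub>R z" "v = w2 + t2 *\<^sub>R z" "w1 \<in> W" "w2 \<in> W" by blast
    then have "u + v = (w1 + w2) + (t1 + t2) *\<^sub>R z" "w1 + w2 \<in> W" using Wa by (auto simp: algebra_simps)
    then show "u + v \<in> {w + t *\<^sub>R z |w t. w \<in> W}" by blast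
  next
    fix a u assume "u \<in> {w + t *\<^sub>R z |w t. w \<in> W}"
    then obtain w1 t1 where "u = w1 + t1 *\<^sub>R z" "w1 \<in> W" by blast
    then have "a *\<^sub>R u = (a *\<^sub>R w1) + (a * t1) *\<^sub>R z" "a *\<^sub>R w1 \<in> W" using Ws by (auto simp: algebra_simps)
    then show "a *\<^sub>R u \<in> {w + t *\<^sub>R z |w t. w \<in> W}" by blast
  qed
  moreover have "W \<subseteq> W'" unfolding W'_def by (force)
  moreover have "z \<in> W'" unfolding W'_def using W0 by (metis (mono_tags, lifting) add_0 mem_Collect_eq scaleR_one)
  moreover have "lin_on W' G"
    unfolding lin_on_def W'_def
  proof (intro conjI ballI allI)
    fix u v assume "u \<in> {w + t *\<^sub>R z |w t. w \<in> W}" "v \<in> {w + t *\<^sub>R z |w t. w \<in> W}"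
    then obtain w1 t1 w2 t2 where "u = w1 + t1 *\<^sub>R z" "v = w2 + t2 *\<^sub>R z" "w1 \<in> W" "w2 \<in> W" by blast
    moreover have "u + v = (w1 + w2) + (t1 + t2) *\<^sub>R z" using calculation by (auto simp: algebra_simps)
    moreover have "G ((w1 + w2) + (t1 + t2) *\<^sub>R z) = f (w1 + w2) + (t1 + t2) * c" using Geq Wa calculation by blast
    ultimately show "G (u + v) = G u + G v" using Geq fa by (simp add: algebra_simps)
  next
    fix a u assume "u \<in> {w + t *\<^sub>R z |w t. w \<in> W}"
    then obtain w1 t1 where "u = w1 + t1 *\<^sub>R z" "w1 \<in> W" by blast
    moreover have "a *\<^sub>R u = (a *\<^sub>R w1) + (a * t1) *\<^sub>R z" using calculation by (auto simp: algebra_simps)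
    ultimately show "G (a *\<^sub>R u) = a * G u" using Geq Ws fs by (simp add: algebra_simps)
  qed
  moreover have "dom_on W' G"
    unfolding dom_on_def W'_def
  proof (intro ballI)
    fix u assume "u \<in> {w + t *\<^sub>R z |w t. w \<in> W}"
    then obtain w t where u: "u = w + t *\<^sub>R z" "w \<in> W" by blast
    have "f w + t * c \<le> norm (w + t *\<^sub>R z)"
    proof (cases "t > 0")
      case True
      have "f ((1/t) *\<^sub>R w) + c \<le> norm ((1/t) *\<^sub>R w + z)" using c1 Ws u(2) by blast
      then have "t * (f ((1/t) *\<^sub>R w) + c) \<le> t * norm ((1/t) *\<^sub>R w + z)" using True by simp
      moreover have "t * f ((1/t) *\<^sub>R w) = f w" using fs[OF u(2)] True by simp
      moreover have "t * norm ((1/t) *\<^sub>R w + z) = norm (t *\<^sub>R ((1/t) *\<^sub>R w + z))" using True by simp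
      moreover have "t *\<^sub>R ((1/t) *\<^sub>R w + z) = w + t *\<^sub>R z" using True by (simp add: algebra_simps)
      ultimately show ?thesis by (simp add: algebra_simps)
    next
      case False
      show ?thesis
      proof (cases "t = 0")
        case True then show ?thesis using fd u(2) by simp
      next
        case False2: False
        define s where "s = - t"
        have sp: "s > 0" using False False2 s_def by simp
        have "f ((1/s) *\<^sub>R w) - c \<le> norm ((1/s) *\<^sub>R w - z)" using c2 Ws u(2) by blast
        then have "s * (f ((1/s) *\<^sub>R w) - c) \<le> s * norm ((1/s) *\<^sub>R w - z)" using sp by simp
        moreover have "s * f ((1/s) *\<^sub>R w) = f w" using fs[OF u(2)] sp by simp
        moreover have "s * norm ((1/s) *\<^sub>R w - z) = norm (s *\<^sub>R ((1/s) *\<^sub>R w - z))" using sp by simp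
        moreover have "s *\<^sub>R ((1/s) *\<^sub>R w - z) = w + t *\<^sub>R z" using sp s_def by (simp add: algebra_simps)
        ultimately show ?thesis using s_def by (simp add: algebra_simps)
      qed
    qed
    then show "G u \<le> norm u" using u Geq by simp
  qed
  moreover have "\<forall>w\<in>W. G w = f w" using Geq[of _ 0] by simp
  moreover have "f 0 = 0" using fs[OF W0, of 0] by simp
  moreover have "G z = c" using Geq[OF W0, of 1] calculation by simp
  ultimately show ?thesis by blast
qed

lemma exists_c:
  fixes W :: "'v::real_normed_vector set"
  assumes W: "lsub W" and f: "lin_on W f" "dom_on W f"
  shows "\<exists>c. (\<forall>w\<in>W. f w + c \<le> norm (w + z)) \<and> (\<forall>w\<in>W. f w - c \<le> norm (w - z))"
proof -
  define S where "S = (\<lambda>w. f w - norm (w - z)) ` W"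
  have key: "f w - norm (w - z) \<le> norm (w' + z) - f w'" if "w \<in> W" "w' \<in> W" for w w'
  proof -
    have "f w + f w' = f (w + w')" using f(1) that unfolding lin_on_def by metis
    also have "\<dots> \<le> norm (w + w')" using f(2) that W unfolding dom_on_def lsub_def by blast
    also have "\<dots> = norm ((w - z) + (w' + z))" by (simp add: algebra_simps)
    also have "\<dots> \<le> norm (w - z) + norm (w' + z)" by (rule norm_triangle_ineq)
    finally show ?thesis by simp
  qed
  have ne: "S \<noteq> {}" using W unfolding S_def lsub_def by blast
  have bdd: "bdd_above S" unfolding S_def bdd_above_def using key W unfolding lsub_def by blast
  define c where "c = Sup S"
  have "f w - c \<le> norm (w - z)" if "w \<in> W" for w
  proof -
    have "f w - norm (w - z) \<le> c" unfolding c_def using cSup_upper[OF _ bdd] that S_def by blast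
    then show ?thesis by simp
  qed
  moreover have "f w + c \<le> norm (w + z)" if "w \<in> W" for w
  proof -
    have "c \<le> norm (w + z) - f w" unfolding c_def
      by (rule cSup_least[OF ne]) (use key that in \<open>auto simp: S_def\<close>)
    then show ?thesis by simp
  qed
  ultimately show ?thesis by blast
qed

definition graph_of :: "'v set \<Rightarrow> ('v \<Rightarrow> real) \<Rightarrow> ('v \<times> real) set" where
  "graph_of D g = (\<lambda>x. (x, g x)) ` D"

lemma graph_mem[simp]: "p \<in> graph_of D g \<longleftrightarrow> fst p \<in> D \<and> snd p = g (fst p)"
  unfolding graph_of_def by (cases p) auto

lemma graph_fst[simp]: "fst ` graph_of D g = D"
  unfolding graph_of_def by (simp add: image_image)

lemma graph_of_sub: "graph_of D g \<subseteq> graph_of D' g' \<longleftrightarrow> D \<subseteq> D' \<and> (\<forall>x\<in>D. g x = g' x)"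
proof
  assume H: "graph_of D g \<subseteq> graph_of D' g'"
  have "x \<in> D' \<and> g x = g' x" if "x \<in> D" for x
  proof -
    have "(x, g x) \<in> graph_of D g" using that by simp
    then have "(x, g x) \<in> graph_of D' g'" using H by blast
    then show ?thesis by simp
  qed
  then show "D \<subseteq> D' \<and> (\<forall>x\<in>D. g x = g' x)" by blast
next
  assume "D \<subseteq> D' \<and> (\<forall>x\<in>D. g x = g' x)"
  then show "graph_of D g \<subseteq> graph_of D' g'" by (auto simp: subset_iff)
qed

theorem hahn_banach:
  fixes Z :: "'v::real_normed_vector set"
  assumes Z: "lsub Z" and W: "lsub W" "W \<subseteq> Z" and f: "lin_on W f" "dom_on W f"
  shows "\<exists>F. lin_on Z F \<and> dom_on Z F \<and> (\<forall>w\<in>W. F w = f w)"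
proof -
  define P where "P D g \<longleftrightarrow> lsub D \<and> W \<subseteq> D \<and> D \<subseteq> Z \<and> lin_on D g \<and> dom_on D g \<and> (\<forall>w\<in>W. g w = f w)" for D g
  define A where "A = {H. \<exists>D g. H = graph_of D g \<and> P D g}"
  have "\<exists>M\<in>A. \<forall>X\<in>A. M \<subseteq> X \<longrightarrow> X = M"
  proof (rule Zorn_Lemma2, intro ballI)
    fix C assume C: "C \<in> chains A"
    show "\<exists>U\<in>A. \<forall>X\<in>C. X \<subseteq> U"
    proof (cases "C = {}")
      case True
      have "graph_of W f \<in> A" unfolding A_def P_def using W f by blast
      then show ?thesis using True by blast
    next
      case False
      have CA: "C \<subseteq> A" using C chainsD2 by blast
      define U where "U = \<Union>C"
      define D where "D = fst ` U"
      define g where "g x = (SOME a. (x, a) \<in> U)" for x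
      have func: "a = b" if xa: "(x, a) \<in> U" "(x, b) \<in> U" for x a b
      proof -
        obtain H1 H2 where H: "H1 \<in> C" "H2 \<in> C" "(x,a) \<in> H1" "(x,b) \<in> H2" using xa U_def by blast
        have "H1 \<subseteq> H2 \<or> H2 \<subseteq> H1" using chainsD[OF C H(1,2)] .
        moreover obtain D2 g2 where "H2 = graph_of D2 g2" using H(2) CA A_def by blast
        moreover obtain D1 g1 where "H1 = graph_of D1 g1" using H(1) CA A_def by blast
        ultimately show ?thesis using H(3,4) by (metis graph_mem snd_conv fst_conv subsetD)
      qed
      have gU: "(x, a) \<in> U \<Longrightarrow> g x = a" for x a
        unfolding g_def by (rule some_equality) (auto intro: func)
      have two: "\<exists>D' g'. graph_of D' g' \<in> C \<and> P D' g' \<and> x \<in> D' \<and> y \<in> D' \<and> (\<forall>v\<in>D'. g v = g' v)"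
        if xy: "x \<in> D" "y \<in> D" for x y
      proof -
        obtain a b where ab: "(x,a) \<in> U" "(y,b) \<in> U" using xy D_def by force
        obtain H1 H2 where H: "H1 \<in> C" "H2 \<in> C" "(x,a) \<in> H1" "(y,b) \<in> H2" using ab U_def by blast
        obtain D2 g2 where H2: "H2 = graph_of D2 g2" "P D2 g2" using H(2) CA A_def by blast
        obtain D1 g1 where H1: "H1 = graph_of D1 g1" "P D1 g1" using H(1) CA A_def by blast
        have agree: "\<forall>v\<in>D'. g v = g' v" if "graph_of D' g' \<in> C" for D' g'
        proof
          fix v assume "v \<in> D'"
          then have "(v, g' v) \<in> U" using that U_def unfolding graph_of_def by blast
          then show "g v = g' v" by (rule gU)
        qed
        have "H1 \<subseteq> H2 \<or> H2 \<subseteq> H1" using chainsD[OF C H(1,2)] .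
        then show ?thesis
        proof
          assume "H1 \<subseteq> H2"
          then have "x \<in> D2" "y \<in> D2" using H H1 H2 by (metis graph_mem fst_conv subsetD)+
          then show ?thesis using H2 H(2) agree by blast
        next
          assume "H2 \<subseteq> H1"
          then have "x \<in> D1" "y \<in> D1" using H H1 H2 by (metis graph_mem fst_conv subsetD)+
          then show ?thesis using H1 H(1) agree by blast
        qed
      qed
      have UDg: "U = graph_of D g"
      proof
        show "U \<subseteq> graph_of D g"
        proof
          fix p assume p: "p \<in> U"
          then have "fst p \<in> D" unfolding D_def by blast
          moreover have "g (fst p) = snd p" using gU[of "fst p" "snd p"] p by simp
          ultimately show "p \<in> graph_of D g" by simp
        qed
        show "graph_of D g \<subseteq> U"
        proof
          fix p assume "p \<in> graph_of D g"
          then obtain x where x: "x \<in> D" "p = (x, g x)" unfolding graph_of_def by blast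
          then obtain q where q: "q \<in> U" "x = fst q" unfolding D_def by blast
          then have "q = (x, snd q)" by simp
          then have "g x = snd q" using gU q(1) by metis
          then show "p \<in> U" using x(2) q \<open>q = (x, snd q)\<close> by simp
        qed
      qed
      obtain H0 where H0: "H0 \<in> C" using False by blast
      obtain D0 g0 where "H0 = graph_of D0 g0" "P D0 g0" using H0 CA A_def by blast
      then have "W \<subseteq> fst ` H0" unfolding P_def by simp
      moreover have "fst ` H0 \<subseteq> D" unfolding D_def U_def using H0 by blast
      ultimately have WD: "W \<subseteq> D" by blast
      have "P D g"
        unfolding P_def
      proof (intro conjI)
        show "W \<subseteq> D" by (rule WD)
        show "lsub D" unfolding lsub_def
        proof (intro conjI ballI allI)
          show "0 \<in> D" using WD W unfolding lsub_def by blast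
        next
          fix u v assume "u \<in> D" "v \<in> D"
          then obtain D' g' where "graph_of D' g' \<in> C" "P D' g'" "u \<in> D'" "v \<in> D'" using two by blast
          then have "u + v \<in> D'" "graph_of D' g' \<subseteq> U" unfolding P_def lsub_def U_def by blast+
          then have "u + v \<in> fst ` graph_of D' g'" by simp
          then show "u + v \<in> D" unfolding D_def using \<open>graph_of D' g' \<subseteq> U\<close> by blast
        next
          fix a u assume "u \<in> D"
          then obtain D' g' where "graph_of D' g' \<in> C" "P D' g'" "u \<in> D'" using two by blast
          then have "a *\<^sub>R u \<in> D'" "graph_of D' g' \<subseteq> U" unfolding P_def lsub_def U_def by blast+
          then have "a *\<^sub>R u \<in> fst ` graph_of D' g'" by simp
          then show "a *\<^sub>R u \<in> D" unfolding D_def using \<open>graph_of D' g' \<subseteq> U\<close> by blast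
        qed
        show "D \<subseteq> Z"
        proof
          fix u assume "u \<in> D"
          then obtain D' g' where "P D' g'" "u \<in> D'" using two by blast
          then show "u \<in> Z" unfolding P_def by blast
        qed
        show "lin_on D g" unfolding lin_on_def
        proof (intro conjI ballI allI)
          fix u v assume "u \<in> D" "v \<in> D"
          then obtain D' g' where "graph_of D' g' \<in> C" "P D' g'" "u \<in> D'" "v \<in> D'" "\<forall>v\<in>D'. g v = g' v" using two by blast
          then show "g (u + v) = g u + g v" unfolding P_def lsub_def lin_on_def by (metis (no_types, lifting))
        next
          fix a u assume "u \<in> D"
          then obtain D' g' where "graph_of D' g' \<in> C" "P D' g'" "u \<in> D'" "\<forall>v\<in>D'. g v = g' v" using two by blast
          then show "g (a *\<^sub>R u) = a * g u" unfolding P_def lsub_def lin_on_def by (metis (no_types, lifting))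
        qed
        show "dom_on D g" unfolding dom_on_def
        proof
          fix u assume "u \<in> D"
          then obtain D' g' where "P D' g'" "u \<in> D'" "\<forall>v\<in>D'. g v = g' v" using two by blast
          then show "g u \<le> norm u" unfolding P_def dom_on_def by metis
        qed
        show "\<forall>w\<in>W. g w = f w"
        proof
          fix w assume "w \<in> W"
          then have "w \<in> D" using WD by blast
          then obtain D' g' where "P D' g'" "w \<in> D'" "\<forall>v\<in>D'. g v = g' v" using two by blast
          then show "g w = f w" using \<open>w \<in> W\<close> unfolding P_def by metis
        qed
      qed
      then have "U \<in> A" unfolding A_def using UDg by blast
      then show ?thesis unfolding U_def by blast
    qed
  qed
  then obtain M where M: "M \<in> A" and max: "\<forall>X\<in>A. M \<subseteq> X \<longrightarrow> X = M" by blast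
  obtain D g where Mg: "M = graph_of D g" "P D g" using M A_def by blast
  have "D = Z"
  proof (rule ccontr)
    assume "D \<noteq> Z"
    then obtain z where z: "z \<in> Z" "z \<notin> D" using Mg(2) unfolding P_def by blast
    have PD: "lsub D" "lin_on D g" "dom_on D g" using Mg(2) unfolding P_def by blast+
    obtain c where c: "\<forall>w\<in>D. g w + c \<le> norm (w + z)" "\<forall>w\<in>D. g w - c \<le> norm (w - z)"
      using exists_c[OF PD] by blast
    define D' where "D' = {w + t *\<^sub>R z | w t. w \<in> D}"
    obtain G where G: "lsub D'" "D \<subseteq> D'" "z \<in> D'" "lin_on D' G" "dom_on D' G" "\<forall>w\<in>D. G w = g w"
      using one_step[OF PD z(2) c] unfolding D'_def by blast
    have "D' \<subseteq> Z"
    proof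
      fix u assume "u \<in> D'"
      then obtain w t where "u = w + t *\<^sub>R z" "w \<in> D" unfolding D'_def by blast
      moreover have "D \<subseteq> Z" using Mg(2) unfolding P_def by blast
      ultimately show "u \<in> Z" using Z z(1) unfolding lsub_def by blast
    qed
    moreover have "\<forall>w\<in>W. G w = f w" using G(6) Mg(2) unfolding P_def by (metis subsetD)
    ultimately have "P D' G" unfolding P_def using G Mg(2) unfolding P_def by blast
    then have "graph_of D' G \<in> A" unfolding A_def by blast
    moreover have "M \<subseteq> graph_of D' G" using Mg(1) G graph_of_sub by metis
    ultimately have "graph_of D' G = graph_of D g" using max Mg(1) by blast
    then have "fst ` graph_of D' G = fst ` graph_of D g" by simp
    then have "D' = D" by simp
    then show False using G(3) z(2) by blast
  qed
  then show ?thesis using Mg(2) unfolding P_def by blast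
qed



lemma compact_subseq:
  fixes S :: "'v::metric_space set"
  assumes "compact S" "\<forall>n. f n \<in> S"
  obtains l r where "l \<in> S" "strict_mono (r :: nat \<Rightarrow> nat)" "(f \<circ> r) \<longlonglongrightarrow> l"
  using seq_compactE[OF compact_imp_seq_compact[OF assms(1)] assms(2)] by blast

lemma real_subseq:
  fixes X :: "nat \<Rightarrow> real"
  assumes "\<forall>n. \<bar>X n\<bar> \<le> B"
  obtains l r where "strict_mono (r :: nat \<Rightarrow> nat)" "(X \<circ> r) \<longlonglongrightarrow> l"
proof -
  have "\<forall>n. X n \<in> cball 0 B" using assms by (simp add: dist_real_def)
  then show ?thesis using compact_subseq[OF compact_cball] that by metis
qed

lemma lsub_UNIV: "lsub UNIV" unfolding lsub_def by simp

lemma supp_of: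
  assumes "lsub Z" "lin_on Z G" "dom_on Z G" "G y0 = norm y0"
  shows "support_functional_on Z y0 G"
  using assms dom_abs[OF assms(1-3)] unfolding support_functional_on_def lin_on_def by blast

lemma lin_on_mono: "lin_on Z G \<Longrightarrow> W \<subseteq> Z \<Longrightarrow> lin_on W G"
  unfolding lin_on_def by blast

lemma EXT:
  fixes Z :: "'v::real_normed_vector set"
  assumes Z: "lsub Z" and y0: "y0 \<in> Z" "y0 \<noteq> 0" and zZ: "z \<in> Z"
    and H: "\<forall>a t. a * norm y0 + t * c \<le> norm (a *\<^sub>R y0 + t *\<^sub>R z)"
  shows "\<exists>G. support_functional_on Z y0 G \<and> G z = c"
proof -
  have Zs: "\<And>a u. u \<in> Z \<Longrightarrow> a *\<^sub>R u \<in> Z" and Za: "\<And>u v. u \<in> Z \<Longrightarrow> v \<in> Z \<Longrightarrow> u + v \<in> Z"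
    using Z unfolding lsub_def by blast+
  have W0: "lsub {0::'v}" unfolding lsub_def by simp
  have f0: "lin_on {0} (\<lambda>_. 0)" "dom_on {0} (\<lambda>_. 0)" unfolding lin_on_def dom_on_def by simp_all
  have n0: "y0 \<notin> {0}" using y0 by simp
  define W1 where "W1 = {w + t *\<^sub>R y0 | w t. w \<in> {0::'v}}"
  obtain G1 where G1: "lsub W1" "{0} \<subseteq> W1" "y0 \<in> W1" "lin_on W1 G1" "dom_on W1 G1" "G1 y0 = norm y0"
    using one_step[OF W0 f0 n0, of "norm y0"] unfolding W1_def by auto
  have W1e: "W1 = {t *\<^sub>R y0 | t. True}" unfolding W1_def by auto
  have W1Z: "W1 \<subseteq> Z" using W1e Zs y0 by auto
  have G1a: "G1 (a *\<^sub>R y0) = a * norm y0" for a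
    using G1(3,4,6) unfolding lin_on_def by metis
  show ?thesis
  proof (cases "z \<in> W1")
    case True
    then obtain t0 where t0: "z = t0 *\<^sub>R y0" using W1e by blast
    have "- t0 * norm y0 + 1 * c \<le> norm ((- t0) *\<^sub>R y0 + 1 *\<^sub>R z)" using H by blast
    moreover have "t0 * norm y0 + (-1) * c \<le> norm (t0 *\<^sub>R y0 + (-1) *\<^sub>R z)" using H by blast
    ultimately have c: "c = t0 * norm y0" using t0 by simp
    obtain F where F: "lin_on Z F" "dom_on Z F" "\<forall>w\<in>W1. F w = G1 w"
      using hahn_banach[OF Z G1(1) W1Z G1(4,5)] by blast
    have "support_functional_on Z y0 F" using supp_of[OF Z F(1,2)] F(3) G1(3,6) by simp
    moreover have "F z = c" using F(3) True t0 c G1a by simp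
    ultimately show ?thesis by blast
  next
    case False
    have c1: "\<forall>w\<in>W1. G1 w + c \<le> norm (w + z)"
    proof
      fix w assume "w \<in> W1"
      then obtain a where "w = a *\<^sub>R y0" using W1e by blast
      moreover have "a * norm y0 + 1 * c \<le> norm (a *\<^sub>R y0 + 1 *\<^sub>R z)" using H by blast
      ultimately show "G1 w + c \<le> norm (w + z)" using G1a by simp
    qed
    have c2: "\<forall>w\<in>W1. G1 w - c \<le> norm (w - z)"
    proof
      fix w assume "w \<in> W1"
      then obtain a where "w = a *\<^sub>R y0" using W1e by blast
      moreover have "a * norm y0 + (-1) * c \<le> norm (a *\<^sub>R y0 + (-1) *\<^sub>R z)" using H by blast
      ultimately show "G1 w - c \<le> norm (w - z)" using G1a by simp
    qed
    define W2 where "W2 = {w + t *\<^sub>R z | w t. w \<in> W1}"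
    obtain G2 where G2: "lsub W2" "W1 \<subseteq> W2" "z \<in> W2" "lin_on W2 G2" "dom_on W2 G2"
       "\<forall>w\<in>W1. G2 w = G1 w" "G2 z = c"
      using one_step[OF G1(1,4,5) False c1 c2] unfolding W2_def by blast
    have W2Z: "W2 \<subseteq> Z" unfolding W2_def using W1Z Za Zs zZ by blast
    obtain F where F: "lin_on Z F" "dom_on Z F" "\<forall>w\<in>W2. F w = G2 w"
      using hahn_banach[OF Z G2(1) W2Z G2(4,5)] by blast
    have "support_functional_on Z y0 F" using supp_of[OF Z F(1,2)] F(3) G2(2,6) G1(3,6) by auto
    moreover have "F z = c" using F(3) G2(3,7) by simp
    ultimately show ?thesis by blast
  qed
qed

lemma supp_exists:
  fixes Z :: "'v::real_normed_vector set"
  assumes Z: "lsub Z" and y0: "y0 \<in> Z"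
  shows "\<exists>G. support_functional_on Z y0 G"
proof (cases "y0 = 0")
  case True
  then show ?thesis unfolding support_functional_on_def by (intro exI[of _ "\<lambda>_. 0"]) simp
next
  case False
  have "\<forall>a t. a * norm y0 + t * norm y0 \<le> norm (a *\<^sub>R y0 + t *\<^sub>R y0)"
  proof (intro allI)
    fix a t
    have "a *\<^sub>R y0 + t *\<^sub>R y0 = (a + t) *\<^sub>R y0" by (simp add: scaleR_add_left)
    then show "a * norm y0 + t * norm y0 \<le> norm (a *\<^sub>R y0 + t *\<^sub>R y0)"
      by (simp add: distrib_right[symmetric] mult_right_mono)
  qed
  then show ?thesis using EXT[OF Z y0 False y0] by blast
qed

lemma supp_bl: "support_functional_on UNIV u s \<Longrightarrow> bounded_linear s"
  unfolding support_functional_on_def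
  by (intro bounded_linear_intro[where K=1]) auto

lemma norming:
  fixes x :: "'v::real_normed_vector"
  shows "\<exists>h::'v \<Rightarrow>\<^sub>L real. h x = norm x \<and> (\<forall>u. \<bar>h u\<bar> \<le> norm u)"
proof -
  obtain s where s: "support_functional_on UNIV x s" using supp_exists[OF lsub_UNIV] by blast
  have "blinfun_apply (Blinfun s) = s" using supp_bl[OF s] by (rule bounded_linear_Blinfun_apply)
  then show ?thesis using s unfolding support_functional_on_def by (metis UNIV_I)
qed

lemma SEP:
  fixes u v :: "'v::real_normed_vector"
  assumes "\<forall>h::'v \<Rightarrow>\<^sub>L real. h u = h v"
  shows "u = v"
proof -
  obtain h :: "'v \<Rightarrow>\<^sub>L real" where "h (u - v) = norm (u - v)" using norming by blast
  moreover have "h (u - v) = h u - h v" by (simp add: blinfun.diff_right)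
  ultimately show ?thesis using assms by simp
qed

lemma SM:
  fixes Z :: "'v::real_normed_vector set"
  assumes Z: "lsub Z" and sp: "smooth_point_in Z y0" and yZ: "\<forall>n. y n \<in> Z" and yl: "y \<longlonglongrightarrow> y0"
    and hl: "\<forall>n. lin_on Z (h n)" and hd: "\<forall>n. \<forall>u\<in>Z. \<bar>h n u\<bar> \<le> norm u"
    and hy: "(\<lambda>n. h n (y n)) \<longlonglongrightarrow> norm y0"
    and g: "support_functional_on Z y0 g" and zZ: "z \<in> Z"
  shows "(\<lambda>n. h n z) \<longlonglongrightarrow> g z"
proof (rule ccontr)
  assume nc: "\<not> (\<lambda>n. h n z) \<longlonglongrightarrow> g z"
  then obtain e where e: "e > 0" "\<forall>N. \<exists>n\<ge>N. \<not> norm (h n z - g z) < e"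
    unfolding LIMSEQ_iff by blast
  define S where "S = {n. e \<le> \<bar>h n z - g z\<bar>}"
  have infS: "infinite S" unfolding infinite_nat_iff_unbounded_le S_def using e(2) by force
  define q where "q = enumerate S"
  have q: "strict_mono q" "\<forall>n. e \<le> \<bar>h (q n) z - g z\<bar>"
    using strict_mono_enumerate[OF infS] enumerate_in_set[OF infS] unfolding q_def S_def by auto
  have "\<forall>n. \<bar>h (q n) z\<bar> \<le> norm z" using hd zZ by blast
  then obtain c r where r: "strict_mono r" "((\<lambda>n. h (q n) z) \<circ> r) \<longlonglongrightarrow> c"
    using real_subseq by metis
  define s where "s = q \<circ> r"
  have s: "strict_mono s" using q(1) r(1) unfolding s_def by (simp add: strict_mono_o)
  have sc: "(\<lambda>n. h (s n) z) \<longlonglongrightarrow> c" using r(2) unfolding s_def comp_def by simp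
  have "(\<lambda>n. \<bar>h (s n) z - g z\<bar>) \<longlonglongrightarrow> \<bar>c - g z\<bar>" by (intro tendsto_intros sc)
  moreover have "\<forall>n. e \<le> \<bar>h (s n) z - g z\<bar>" using q(2) unfolding s_def by simp
  ultimately have ce: "e \<le> \<bar>c - g z\<bar>" using LIMSEQ_le_const by blast
  have sy: "(\<lambda>n. y (s n)) \<longlonglongrightarrow> y0" using LIMSEQ_subseq_LIMSEQ[OF yl s] by (simp add: comp_def)
  have shy: "(\<lambda>n. h (s n) (y (s n))) \<longlonglongrightarrow> norm y0" using LIMSEQ_subseq_LIMSEQ[OF hy s] by (simp add: comp_def)
  have ineq: "\<forall>a t. a * norm y0 + t * c \<le> norm (a *\<^sub>R y0 + t *\<^sub>R z)"
  proof (intro allI)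
    fix a t
    have l1: "(\<lambda>n. a * h (s n) (y (s n)) + t * h (s n) z) \<longlonglongrightarrow> a * norm y0 + t * c"
      by (intro tendsto_intros shy sc)
    have l2: "(\<lambda>n. norm (a *\<^sub>R y (s n) + t *\<^sub>R z)) \<longlonglongrightarrow> norm (a *\<^sub>R y0 + t *\<^sub>R z)"
      by (intro tendsto_intros sy)
    have "a * h (s n) (y (s n)) + t * h (s n) z \<le> norm (a *\<^sub>R y (s n) + t *\<^sub>R z)" for n
    proof -
      have m: "a *\<^sub>R y (s n) \<in> Z" "t *\<^sub>R z \<in> Z" using Z yZ zZ unfolding lsub_def by blast+
      have "h (s n) (a *\<^sub>R y (s n) + t *\<^sub>R z) = a * h (s n) (y (s n)) + t * h (s n) z"
        using hl m yZ zZ unfolding lin_on_def by metis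
      moreover have "a *\<^sub>R y (s n) + t *\<^sub>R z \<in> Z" using Z m unfolding lsub_def by blast
      ultimately show ?thesis using hd by (metis abs_le_D1)
    qed
    then show "a * norm y0 + t * c \<le> norm (a *\<^sub>R y0 + t *\<^sub>R z)"
      using LIMSEQ_le[OF l1 l2] by blast
  qed
  have y0Z: "y0 \<in> Z" "y0 \<noteq> 0" using sp unfolding smooth_point_in_def by auto
  obtain G where G: "support_functional_on Z y0 G" "G z = c" using EXT[OF Z y0Z zZ ineq] by blast
  have "G z = g z" using sp G(1) g zZ unfolding smooth_point_in_def by blast
  then show False using ce e(1) G(2) by simp
qed



lemma compact_closure_sub:
  fixes A :: "'v::metric_space set"
  assumes "compact C" "A \<subseteq> C"
  shows "compact (closure A)"
proof -
  have "closure A \<subseteq> C" by (simp add: assms closure_minimal compact_imp_closed)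
  then have "closure A = C \<inter> closure A" by blast
  then show ?thesis using compact_Int_closed[OF assms(1)] by (metis closed_closure)
qed

lemma K_lsub: "lsub (compact_ops :: ('a::real_normed_vector \<Rightarrow>\<^sub>L 'b::real_normed_vector) set)"
  unfolding lsub_def
proof (intro conjI ballI allI)
  have "blinfun_apply (0::'a \<Rightarrow>\<^sub>L 'b) ` cball 0 1 = {0}" by (auto intro: image_eqI[where x=0])
  then show "(0::'a \<Rightarrow>\<^sub>L 'b) \<in> compact_ops" unfolding compact_ops_def by simp
next
  fix S T :: "'a \<Rightarrow>\<^sub>L 'b" assume S: "S \<in> compact_ops" and T: "T \<in> compact_ops"
  let ?A = "closure (blinfun_apply S ` cball 0 1)" and ?B = "closure (blinfun_apply T ` cball 0 1)"
  have c: "compact {x + y | x y. x \<in> ?A \<and> y \<in> ?B}"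
    using compact_sums S T unfolding compact_ops_def by blast
  have "blinfun_apply (S + T) ` cball 0 1 \<subseteq> {x + y | x y. x \<in> ?A \<and> y \<in> ?B}"
  proof
    fix v assume "v \<in> blinfun_apply (S + T) ` cball 0 1"
    then obtain x where "x \<in> cball 0 1" "v = S x + T x" by (auto simp: plus_blinfun.rep_eq)
    then show "v \<in> {x + y | x y. x \<in> ?A \<and> y \<in> ?B}" using closure_subset by blast
  qed
  then show "S + T \<in> compact_ops" unfolding compact_ops_def using compact_closure_sub[OF c] by blast
next
  fix c :: real and S :: "'a \<Rightarrow>\<^sub>L 'b" assume S: "S \<in> compact_ops"
  let ?A = "closure (blinfun_apply S ` cball 0 1)"
  have cc: "compact ((\<lambda>x. c *\<^sub>R x) ` ?A)" using compact_scaling S unfolding compact_ops_def by blast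
  have "blinfun_apply (c *\<^sub>R S) ` cball 0 1 \<subseteq> (\<lambda>x. c *\<^sub>R x) ` ?A"
  proof
    fix v assume "v \<in> blinfun_apply (c *\<^sub>R S) ` cball 0 1"
    then obtain x where "x \<in> cball 0 1" "v = c *\<^sub>R S x" by (auto simp: scaleR_blinfun.rep_eq)
    then show "v \<in> (\<lambda>x. c *\<^sub>R x) ` ?A" using closure_subset by blast
  qed
  then show "c *\<^sub>R S \<in> compact_ops" unfolding compact_ops_def using compact_closure_sub[OF cc] by blast
qed

definition rk :: "('a::real_normed_vector \<Rightarrow>\<^sub>L real) \<Rightarrow> 'b::real_normed_vector \<Rightarrow> ('a \<Rightarrow>\<^sub>L 'b)" where
  "rk \<phi> w = blinfun_scaleR_left w o\<^sub>L \<phi>"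

lemma rk_apply[simp]: "blinfun_apply (rk \<phi> w) x = \<phi> x *\<^sub>R w"
  unfolding rk_def by (simp add: blinfun_compose.rep_eq)

lemma rk_K: "rk \<phi> w \<in> compact_ops"
proof -
  have cc: "compact ((\<lambda>t. t *\<^sub>R w) ` cball 0 (norm \<phi>))"
    by (intro compact_continuous_image continuous_intros compact_cball)
  have "blinfun_apply (rk \<phi> w) ` cball 0 1 \<subseteq> (\<lambda>t. t *\<^sub>R w) ` cball 0 (norm \<phi>)"
  proof
    fix v assume "v \<in> blinfun_apply (rk \<phi> w) ` cball 0 1"
    then obtain x where x: "norm x \<le> 1" "v = \<phi> x *\<^sub>R w" by auto
    have "norm (\<phi> x) \<le> norm \<phi> * norm x" by (rule norm_blinfun)
    also have "\<dots> \<le> norm \<phi>" using x(1) by (simp add: mult_left_le)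
    finally have "\<phi> x \<in> cball 0 (norm \<phi>)" by (simp add: dist_real_def)
    then show "v \<in> (\<lambda>t. t *\<^sub>R w) ` cball 0 (norm \<phi>)" using x(2) by blast
  qed
  then show ?thesis unfolding compact_ops_def using compact_closure_sub[OF cc] by blast
qed

lemma approx:
  fixes A :: "'a::real_normed_vector \<Rightarrow>\<^sub>L 'b::real_normed_vector"
  assumes d: "\<delta> > 0" and x0: "(x0::'a) \<noteq> 0"
  shows "\<exists>x. norm x = 1 \<and> norm (A x) > norm A - \<delta>"
proof (rule ccontr)
  assume "\<not> ?thesis"
  then have H: "\<And>x. norm x = 1 \<Longrightarrow> norm (A x) \<le> norm A - \<delta>" by force
  have u: "norm ((1 / norm x0) *\<^sub>R x0) = 1" using x0 by simp
  then have nn: "0 \<le> norm A - \<delta>" using H[OF u] norm_ge_zero by (meson order_trans)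
  have "norm (A x) \<le> (norm A - \<delta>) * norm x" for x
  proof (cases "x = 0")
    case True then show ?thesis by simp
  next
    case False
    have "norm (A ((1 / norm x) *\<^sub>R x)) \<le> norm A - \<delta>" using H False by simp
    then have "(1 / norm x) * norm (A x) \<le> norm A - \<delta>" by (simp add: blinfun.scaleR_right)
    then show ?thesis using False by (simp add: field_simps)
  qed
  then have "norm A \<le> norm A - \<delta>" using norm_blinfun_bound[OF nn] by blast
  then show False using d by simp
qed

lemma suppK:
  fixes T :: "'a::real_normed_vector \<Rightarrow>\<^sub>L 'b::real_normed_vector"
  assumes x: "norm x = 1" and Tx: "norm (T x) = norm T" and g: "support_functional_on UNIV (T x) g"
  shows "support_functional_on Z T (\<lambda>S. g (S x))"
  unfolding support_functional_on_def
proof (intro conjI ballI allI)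
  have ga: "\<And>u v. g (u + v) = g u + g v" and gs: "\<And>c u. g (c *\<^sub>R u) = c * g u"
    and gb: "\<And>u. \<bar>g u\<bar> \<le> norm u" and gx: "g (T x) = norm (T x)"
    using g unfolding support_functional_on_def by auto
  fix u v :: "'a \<Rightarrow>\<^sub>L 'b"
  show "g ((u + v) x) = g (u x) + g (v x)" by (simp add: plus_blinfun.rep_eq ga)
next
  have gs: "\<And>c u. g (c *\<^sub>R u) = c * g u" using g unfolding support_functional_on_def by auto
  fix c and u :: "'a \<Rightarrow>\<^sub>L 'b"
  show "g ((c *\<^sub>R u) x) = c * g (u x)" by (simp add: scaleR_blinfun.rep_eq gs)
next
  have gb: "\<And>u. \<bar>g u\<bar> \<le> norm u" using g unfolding support_functional_on_def by auto
  fix u :: "'a \<Rightarrow>\<^sub>L 'b"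
  have "\<bar>g (u x)\<bar> \<le> norm (u x)" by (rule gb)
  also have "\<dots> \<le> norm u * norm x" by (rule norm_blinfun)
  finally show "\<bar>g (u x)\<bar> \<le> norm u" using x by simp
next
  show "g (T x) = norm T" using g Tx unfolding support_functional_on_def by simp
qed

lemma supp_any:
  fixes y :: "'b::real_normed_vector"
  assumes sm: "smooth_space TYPE('b)"
  shows "\<exists>g. support_functional_on UNIV y g"
  using supp_exists[OF lsub_UNIV] by blast

lemma supp_parts:
  assumes "support_functional_on UNIV y g"
  shows "\<And>u v. g (u + v) = g u + g v" "\<And>c u. g (c *\<^sub>R u) = c * g u"
    "\<And>u. \<bar>g u\<bar> \<le> norm u" "g y = norm y"
  using assms unfolding support_functional_on_def by auto



lemma near_pm:
  fixes T :: "'a::real_normed_vector \<Rightarrow>\<^sub>L 'b::real_normed_vector"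
  assumes "x \<in> ball x0 e \<union> ball (- x0) e"
  shows "norm (T x) - norm T * e \<le> norm (T x0)"
  using assms
proof
  assume "x \<in> ball x0 e"
  then have d: "norm (x - x0) < e" by (simp add: dist_norm norm_minus_commute)
  have "T x = T x0 + T (x - x0)" by (simp add: blinfun.diff_right)
  then have "norm (T x) \<le> norm (T x0) + norm (T (x - x0))" by (metis norm_triangle_ineq)
  also have "norm (T (x - x0)) \<le> norm T * norm (x - x0)" by (rule norm_blinfun)
  also have "\<dots> \<le> norm T * e" using d by (simp add: mult_left_mono)
  finally show ?thesis by simp
next
  assume "x \<in> ball (- x0) e"
  then have d: "norm (x + x0) < e" by (simp add: dist_norm norm_minus_commute add.commute)
  have "T x = T (- x0) + T (x + x0)" by (simp add: blinfun.add_right blinfun.minus_right)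
  then have "norm (T x) \<le> norm (T (- x0)) + norm (T (x + x0))" by (metis norm_triangle_ineq)
  also have "norm (T (- x0)) = norm (T x0)" by (simp add: blinfun.minus_right)
  also have "norm (T (x + x0)) \<le> norm T * norm (x + x0)" by (rule norm_blinfun)
  also have "\<dots> \<le> norm T * e" using d by (simp add: mult_left_mono)
  finally show ?thesis by simp
qed

lemma supp_diff: "support_functional_on UNIV y h \<Longrightarrow> h (a - b) = h a - h b"
proof -
  assume "support_functional_on UNIV y h"
  then have "h ((a - b) + b) = h (a - b) + h b" using supp_parts(1) by blast
  then show ?thesis by simp
qed

lemma if_dir:
  fixes T :: "'a::real_normed_vector \<Rightarrow>\<^sub>L 'b::real_normed_vector"
  assumes sm: "smooth_space TYPE('b)" and TK: "T \<in> compact_ops" and T0: "T \<noteq> 0"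
    and x0: "norm x0 = 1"
    and C: "\<forall>\<epsilon>>0. \<exists>d>0. \<forall>\<delta>. 0 < \<delta> \<and> \<delta> \<le> d \<and> \<delta> < norm T \<longrightarrow> M_set T \<delta> \<subseteq> ball x0 \<epsilon> \<union> ball (- x0) \<epsilon>"
  shows "smooth_point_in compact_ops T"
proof -
  have nT: "norm T > 0" using T0 by simp
  have x0n: "x0 \<noteq> 0" using x0 by auto
  have Tx0: "norm (T x0) = norm T"
  proof (rule antisym)
    show "norm (T x0) \<le> norm T" using norm_blinfun[of T x0] x0 by simp
    show "norm T \<le> norm (T x0)"
    proof (rule ccontr)
      assume a: "\<not> norm T \<le> norm (T x0)"
      define e where "e = (norm T - norm (T x0)) / (2 * (1 + norm T))"
      have p1: "0 < norm T - norm (T x0)" using a by simp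
      have p2: "0 < 2 * (1 + norm T)" by (smt (verit) norm_ge_zero)
      have ep: "e > 0" unfolding e_def using p1 p2 by (rule divide_pos_pos)
      obtain d where d: "d > 0" "\<forall>\<delta>. 0 < \<delta> \<and> \<delta> \<le> d \<and> \<delta> < norm T \<longrightarrow> M_set T \<delta> \<subseteq> ball x0 e \<union> ball (- x0) e"
        using C ep by blast
      define \<delta> where "\<delta> = min d (min (norm T / 2) e)"
      have dp: "0 < \<delta>" "\<delta> \<le> d" "\<delta> < norm T" "\<delta> \<le> e" using d ep nT unfolding \<delta>_def by (auto simp: min_def simp del: zero_less_norm_iff)
      obtain x where x: "norm x = 1" "norm (T x) > norm T - \<delta>" using approx[OF dp(1) x0n] by blast
      then have "x \<in> M_set T \<delta>" unfolding M_set_def by simp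
      then have "x \<in> ball x0 e \<union> ball (- x0) e" using d(2) dp by blast
      then have "norm (T x) - norm T * e \<le> norm (T x0)" by (rule near_pm)
      then have f1: "norm T - e * (1 + norm T) < norm (T x0)" using x(2) dp(4) by (simp add: algebra_simps)
      have f2: "e * (1 + norm T) = (norm T - norm (T x0)) / 2"
      proof -
        have "(1 + norm T) \<noteq> 0" using p2 by auto
        then show ?thesis unfolding e_def by (simp add: field_simps)
      qed
      have "norm T - (norm T - norm (T x0)) / 2 < norm (T x0)" using f1 unfolding f2 .
      then show False using a by (simp add: field_simps)
    qed
  qed
  have Tx0n: "T x0 \<noteq> 0" using Tx0 nT by auto
  obtain g where g: "support_functional_on UNIV (T x0) g" using supp_exists[OF lsub_UNIV] by blast
  have spY: "smooth_point_in UNIV (T x0)" using sm Tx0n unfolding smooth_space_def by blast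
  define F0 where "F0 = (\<lambda>S::'a \<Rightarrow>\<^sub>L 'b. g (S x0))"
  have F0: "support_functional_on compact_ops T F0" unfolding F0_def by (rule suppK[OF x0 Tx0 g])
  have K: "lsub (compact_ops :: ('a \<Rightarrow>\<^sub>L 'b) set)" by (rule K_lsub)
  have key: "F S \<le> F0 S" if F: "support_functional_on compact_ops T F" and S: "S \<in> compact_ops" for F S
  proof -
    have Fa: "\<And>u v. u \<in> compact_ops \<Longrightarrow> v \<in> compact_ops \<Longrightarrow> F (u + v) = F u + F v"
      and Fs: "\<And>c u. u \<in> compact_ops \<Longrightarrow> F (c *\<^sub>R u) = c * F u"
      and Fb: "\<And>u. u \<in> compact_ops \<Longrightarrow> \<bar>F u\<bar> \<le> norm u" and FT: "F T = norm T"
      using F unfolding support_functional_on_def by auto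
    define t where "t n = inverse (real (Suc n))" for n
    have tp: "t n > 0" "t n \<le> 1" for n unfolding t_def by (auto simp: field_simps)
    have tl: "t \<longlonglongrightarrow> 0" unfolding t_def by (rule LIMSEQ_inverse_real_of_nat)
    define A where "A n = T + t n *\<^sub>R S" for n
    have tSK: "t n *\<^sub>R S \<in> compact_ops" for n using K S unfolding lsub_def by blast
    have AK: "A n \<in> compact_ops" for n using K TK tSK unfolding lsub_def A_def by blast
    have "\<forall>n. \<exists>x. norm x = 1 \<and> norm (A n x) > norm (A n) - (t n)^2"
    proof
      fix n
      have "0 < (t n)^2" using tp(1)[of n] by simp
      then show "\<exists>x. norm x = 1 \<and> norm (A n x) > norm (A n) - (t n)^2" using approx[OF _ x0n] by blast
    qed
    then obtain x where x: "\<And>n. norm (x n) = 1" "\<And>n. norm (A n (x n)) > norm (A n) - (t n)^2"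
      by metis
    define dl where "dl n = t n * (2 * norm S + 1)" for n
    have Mx: "norm (T (x n)) > norm T - dl n" for n
    proof -
      have "T = A n - t n *\<^sub>R S" unfolding A_def by simp
      then have "norm T \<le> norm (A n) + norm (t n *\<^sub>R S)" by (metis norm_triangle_ineq4)
      then have a1: "norm T - t n * norm S \<le> norm (A n)" using tp(1)[of n] by simp
      have "A n (x n) = T (x n) + t n *\<^sub>R S (x n)" unfolding A_def
        by (simp add: plus_blinfun.rep_eq scaleR_blinfun.rep_eq)
      then have "norm (A n (x n)) \<le> norm (T (x n)) + norm (t n *\<^sub>R S (x n))" by (metis norm_triangle_ineq)
      moreover have "norm (S (x n)) \<le> norm S" using norm_blinfun[of S "x n"] x(1) by simp
      ultimately have a2: "norm (A n (x n)) \<le> norm (T (x n)) + t n * norm S"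
        using tp(1)[of n] by (simp add: mult_left_mono order_trans)
      have a3: "(t n)^2 \<le> t n" using tp[of n] by (simp add: power2_eq_square mult_left_le)
      show ?thesis using a1 a2 a3 x(2)[of n] unfolding dl_def by (simp add: algebra_simps)
    qed
    have dll: "dl \<longlonglongrightarrow> 0" unfolding dl_def using tendsto_mult[OF tl tendsto_const] by simp
    define x' where "x' n = (if norm (x n - x0) \<le> norm (x n + x0) then x n else - x n)" for n
    have x'n: "norm (x' n) = 1" for n unfolding x'_def using x(1) by simp
    have x'l: "x' \<longlonglongrightarrow> x0"
      unfolding LIMSEQ_iff
    proof (intro allI impI)
      fix e :: real assume e: "e > 0"
      obtain d where d: "d > 0" "\<forall>\<delta>. 0 < \<delta> \<and> \<delta> \<le> d \<and> \<delta> < norm T \<longrightarrow> M_set T \<delta> \<subseteq> ball x0 e \<union> ball (- x0) e"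
        using C e by blast
      have "eventually (\<lambda>n. dl n < min d (norm T)) sequentially"
      proof -
        have "0 < min d (norm T)" using d(1) nT by linarith
        then show ?thesis using order_tendstoD(2)[OF dll] by blast
      qed
      then obtain N where N: "\<And>n. n \<ge> N \<Longrightarrow> dl n < min d (norm T)" unfolding eventually_sequentially by blast
      have "norm (x' n - x0) < e" if n: "n \<ge> N" for n
      proof -
        have "0 < 2 * norm S + 1" using norm_ge_zero[of S] by linarith
        then have dlp: "dl n > 0" unfolding dl_def using tp(1)[of n] by (simp add: mult_pos_pos)
        have "x n \<in> M_set T (dl n)" unfolding M_set_def using x(1) Mx by simp
        moreover have "0 < dl n \<and> dl n \<le> d \<and> dl n < norm T" using N[OF n] dlp by simp
        ultimately have "x n \<in> ball x0 e \<union> ball (- x0) e" using d(2) by blast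
        moreover have "dist x0 (x n) = norm (x n - x0)" by (simp add: dist_norm norm_minus_commute)
        moreover have "dist (- x0) (x n) = norm (x n + x0)"
        proof -
          have "- x0 - x n = - (x n + x0)" by simp
          then show ?thesis unfolding dist_norm by (metis norm_minus_cancel)
        qed
        ultimately have or: "norm (x n - x0) < e \<or> norm (x n + x0) < e" by auto
        show ?thesis
        proof (cases "norm (x n - x0) \<le> norm (x n + x0)")
          case True
          then show ?thesis using or unfolding x'_def by auto
        next
          case False
          have "- x n - x0 = - (x n + x0)" by simp
          then have "norm (- x n - x0) = norm (x n + x0)" by (metis norm_minus_cancel)
          then show ?thesis using or False unfolding x'_def by auto
        qed
      qed
      then show "\<exists>no. \<forall>n\<ge>no. norm (x' n - x0) < e" by blast
    qed
    define y where "y n = A n (x' n)" for n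
    have ynorm: "norm (y n) = norm (A n (x n))" for n
      unfolding y_def x'_def by (simp add: blinfun.minus_right)
    have yeq: "y n = T (x' n) + t n *\<^sub>R S (x' n)" for n
      unfolding y_def A_def by (simp add: plus_blinfun.rep_eq scaleR_blinfun.rep_eq)
    have Tl: "(\<lambda>n. T (x' n)) \<longlonglongrightarrow> T x0"
      by (rule bounded_linear.tendsto[OF blinfun.bounded_linear_right x'l])
    have Sl: "(\<lambda>n. S (x' n)) \<longlonglongrightarrow> S x0"
      by (rule bounded_linear.tendsto[OF blinfun.bounded_linear_right x'l])
    have yl: "y \<longlonglongrightarrow> T x0"
    proof -
      have "(\<lambda>n. T (x' n) + t n *\<^sub>R S (x' n)) \<longlonglongrightarrow> T x0 + 0 *\<^sub>R S x0"
        by (intro tendsto_intros Tl tl Sl)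
      moreover have "y = (\<lambda>n. T (x' n) + t n *\<^sub>R S (x' n))" by (rule ext) (rule yeq)
      ultimately show ?thesis by simp
    qed
    have "\<forall>n. \<exists>h. support_functional_on UNIV (y n) h" using supp_exists[OF lsub_UNIV] by blast
    then obtain h where h: "\<And>n. support_functional_on UNIV (y n) (h n)" by metis
    have Fl: "F S < h n (S (x' n)) + t n" for n
    proof -
      have e1: "norm (A n) < norm (y n) + (t n)^2" using x(2)[of n] ynorm[of n] by simp
      have "norm (y n) = h n (y n)" using supp_parts(4)[OF h] by simp
      also have "\<dots> = h n (T (x' n)) + t n * h n (S (x' n))"
        using yeq supp_parts(1,2)[OF h] by simp
      finally have e2: "norm (y n) = h n (T (x' n)) + t n * h n (S (x' n))" .
      have "h n (T (x' n)) \<le> norm (T (x' n))" using supp_parts(3)[OF h, of n "T (x' n)"] by simp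
      also have "\<dots> \<le> norm T" using norm_blinfun[of T "x' n"] x'n by simp
      finally have e3: "h n (T (x' n)) \<le> norm T" .
      have "F (A n) = norm T + t n * F S" unfolding A_def using Fa[OF TK tSK] Fs[OF S] FT by simp
      moreover have "F (A n) \<le> norm (A n)" using Fb[OF AK[of n]] by simp
      ultimately have e4: "norm T + t n * F S \<le> norm (A n)" by simp
      have "t n * F S < t n * (h n (S (x' n)) + t n)"
        using e1 e2 e3 e4 by (simp add: algebra_simps power2_eq_square)
      then show ?thesis using tp(1)[of n] by (simp add: mult_less_cancel_left_pos)
    qed
    have hl: "(\<lambda>n. h n (S x0)) \<longlonglongrightarrow> g (S x0)"
    proof (rule SM[OF lsub_UNIV spY _ yl _ _ _ g])
      show "\<forall>n. y n \<in> UNIV" by simp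
      show "\<forall>n. lin_on UNIV (h n)" using h unfolding lin_on_def support_functional_on_def by simp
      show "\<forall>n. \<forall>u\<in>UNIV. \<bar>h n u\<bar> \<le> norm u" using h unfolding support_functional_on_def by simp
      have "(\<lambda>n. norm (y n)) \<longlonglongrightarrow> norm (T x0)" by (intro tendsto_intros yl)
      then show "(\<lambda>n. h n (y n)) \<longlonglongrightarrow> norm (T x0)" using supp_parts(4)[OF h] by simp
      show "S x0 \<in> UNIV" by simp
    qed
    have d0: "(\<lambda>n. h n (S (x' n)) - h n (S x0)) \<longlonglongrightarrow> 0"
    proof (rule Lim_null_comparison)
      have "\<forall>n. norm (h n (S (x' n)) - h n (S x0)) \<le> norm (S (x' n) - S x0)"
      proof
        fix n
        have "h n (S (x' n)) - h n (S x0) = h n (S (x' n) - S x0)" using supp_diff[OF h, of n] by simp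
        moreover have "\<bar>h n (S (x' n) - S x0)\<bar> \<le> norm (S (x' n) - S x0)" using supp_parts(3)[OF h] by blast
        ultimately show "norm (h n (S (x' n)) - h n (S x0)) \<le> norm (S (x' n) - S x0)" by simp
      qed
      then show "eventually (\<lambda>n. norm (h n (S (x' n)) - h n (S x0)) \<le> norm (S (x' n) - S x0)) sequentially"
        by (simp add: always_eventually)
      have "(\<lambda>n. S (x' n) - S x0) \<longlonglongrightarrow> 0" using Sl by (simp add: LIM_zero)
      then show "(\<lambda>n. norm (S (x' n) - S x0)) \<longlonglongrightarrow> 0" by (simp add: tendsto_norm_zero_iff)
    qed
    have "(\<lambda>n. h n (S x0) + (h n (S (x' n)) - h n (S x0)) + t n) \<longlonglongrightarrow> g (S x0) + 0 + 0"
      by (intro tendsto_intros hl d0 tl)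
    then have al: "(\<lambda>n. h n (S (x' n)) + t n) \<longlonglongrightarrow> g (S x0)" by simp
    have "F S \<le> g (S x0)" by (rule LIMSEQ_le_const[OF al]) (use Fl less_imp_le in blast)
    then show ?thesis unfolding F0_def by simp
  qed
  have agree: "F S = F0 S" if F: "support_functional_on compact_ops T F" and S: "S \<in> compact_ops" for F S
  proof -
    have mS: "(-1) *\<^sub>R S \<in> compact_ops" using K S unfolding lsub_def by blast
    have "F ((-1) *\<^sub>R S) = - F S" using F S unfolding support_functional_on_def by (metis mult_minus1)
    moreover have "F0 ((-1) *\<^sub>R S) = - F0 S" using F0 S unfolding support_functional_on_def by (metis mult_minus1)
    ultimately show ?thesis using key[OF F S] key[OF F mS] by simp
  qed
  show ?thesis unfolding smooth_point_in_def using TK T0 F0 agree by metis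
qed



lemma norm_seq:
  fixes T :: "'a::real_normed_vector \<Rightarrow>\<^sub>L 'b::real_normed_vector"
  assumes "\<And>n. norm (x n) = 1" "\<And>n. norm (T (x n)) > norm T - inverse (real (Suc n))"
  shows "(\<lambda>n. norm (T (x n))) \<longlonglongrightarrow> norm T"
proof (rule tendsto_sandwich[of "\<lambda>n. norm T - inverse (real (Suc n))" _ _ "\<lambda>n. norm T"])
  show "\<forall>\<^sub>F n in sequentially. norm T - inverse (real (Suc n)) \<le> norm (T (x n))"
  proof (rule always_eventually, intro allI)
    fix n show "norm T - inverse (real (Suc n)) \<le> norm (T (x n))" using assms(2)[of n] by (rule less_imp_le)
  qed
  have "norm (T (x n)) \<le> norm T" for n using norm_blinfun[of T "x n"] assms(1) by simp
  then show "\<forall>\<^sub>F n in sequentially. norm (T (x n)) \<le> norm T" by (simp add: always_eventually)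
  have "(\<lambda>n. norm T - inverse (real (Suc n))) \<longlonglongrightarrow> norm T - 0"
    by (intro tendsto_intros LIMSEQ_inverse_real_of_nat)
  then show "(\<lambda>n. norm T - inverse (real (Suc n))) \<longlonglongrightarrow> norm T" by simp
  show "(\<lambda>n. norm T) \<longlonglongrightarrow> norm T" by simp
qed

lemma CONV:
  fixes T :: "'a::real_normed_vector \<Rightarrow>\<^sub>L 'b::real_normed_vector"
  assumes refl: "reflexive_space TYPE('a)" and kk: "kadets_klee TYPE('a)"
    and TK: "T \<in> compact_ops" and T0: "T \<noteq> 0" and smT: "smooth_point_in compact_ops T"
    and xu: "\<And>n. norm (x n) = 1" and xl: "(\<lambda>n. norm (T (x n))) \<longlonglongrightarrow> norm T"
  shows "\<exists>r x0. strict_mono r \<and> norm x0 = 1 \<and> norm (T x0) = norm T \<and> (x \<circ> r) \<longlonglongrightarrow> x0"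
proof -
  have nT: "norm T > 0" using T0 by simp
  obtain F0 where F0: "support_functional_on compact_ops T F0" using smT unfolding smooth_point_in_def by blast
  have "\<forall>n. \<exists>g. support_functional_on UNIV (T (x n)) g" using supp_exists[OF lsub_UNIV] by blast
  then obtain g where g: "\<And>n. support_functional_on UNIV (T (x n)) (g n)" by metis
  have Fconv: "(\<lambda>n. g n (S (x n))) \<longlonglongrightarrow> F0 S" if S: "S \<in> compact_ops" for S
  proof (rule SM[OF K_lsub smT, of "\<lambda>n. T"])
    show "\<forall>n. T \<in> compact_ops" using TK by simp
    show "(\<lambda>n. T) \<longlonglongrightarrow> T" by simp
    show "\<forall>n. lin_on compact_ops (\<lambda>S. g n (S (x n)))"
      unfolding lin_on_def using supp_parts(1,2)[OF g] by (simp add: plus_blinfun.rep_eq scaleR_blinfun.rep_eq)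
    show "\<forall>n. \<forall>u\<in>compact_ops. \<bar>g n (blinfun_apply u (x n))\<bar> \<le> norm u"
    proof (intro allI ballI)
      fix n and u :: "'a \<Rightarrow>\<^sub>L 'b"
      have "\<bar>g n (u (x n))\<bar> \<le> norm (u (x n))" using supp_parts(3)[OF g] by blast
      also have "\<dots> \<le> norm u" using norm_blinfun[of u "x n"] xu[of n] by simp
      finally show "\<bar>g n (u (x n))\<bar> \<le> norm u" .
    qed
    show "(\<lambda>n. g n (T (x n))) \<longlonglongrightarrow> norm T" using xl supp_parts(4)[OF g] by simp
    show "support_functional_on compact_ops T F0" by (rule F0)
    show "S \<in> compact_ops" by (rule S)
  qed
  have inb: "\<forall>n. T (x n) \<in> closure (blinfun_apply T ` cball 0 1)"
  proof
    fix n
    have "x n \<in> cball 0 1" using xu[of n] by simp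
    then have "T (x n) \<in> blinfun_apply T ` cball 0 1" by blast
    then show "T (x n) \<in> closure (blinfun_apply T ` cball 0 1)" using closure_subset by blast
  qed
  have cT: "compact (closure (blinfun_apply T ` cball 0 1))" using TK unfolding compact_ops_def by blast
  obtain y r where r: "strict_mono r" "((\<lambda>n. T (x n)) \<circ> r) \<longlonglongrightarrow> y"
    using compact_subseq[OF cT inb] by blast
  have ry: "(\<lambda>n. T (x (r n))) \<longlonglongrightarrow> y" using r(2) by (simp add: comp_def)
  have rxl: "(\<lambda>n. norm (T (x (r n)))) \<longlonglongrightarrow> norm T" using LIMSEQ_subseq_LIMSEQ[OF xl r(1)] by (simp add: comp_def)
  have ny: "norm y = norm T" using LIMSEQ_unique[OF tendsto_norm[OF ry] rxl] .
  have gy: "(\<lambda>n. g (r n) y) \<longlonglongrightarrow> norm T"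
  proof -
    have e: "g (r n) y = norm (T (x (r n))) + g (r n) (y - T (x (r n)))" for n
      using supp_diff[OF g, of "r n" y "T (x (r n))"] supp_parts(4)[OF g, of "r n"] by simp
    have d0: "(\<lambda>n. g (r n) (y - T (x (r n)))) \<longlonglongrightarrow> 0"
    proof (rule Lim_null_comparison)
      show "\<forall>\<^sub>F n in sequentially. norm (g (r n) (y - T (x (r n)))) \<le> norm (y - T (x (r n)))"
        using supp_parts(3)[OF g] by (simp add: always_eventually)
      have "(\<lambda>n. T (x (r n)) - y) \<longlonglongrightarrow> 0" using ry by (simp add: LIM_zero)
      then have "(\<lambda>n. norm (T (x (r n)) - y)) \<longlonglongrightarrow> 0" by (simp add: tendsto_norm_zero_iff)
      then show "(\<lambda>n. norm (y - T (x (r n)))) \<longlonglongrightarrow> 0" by (simp add: norm_minus_commute)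
    qed
    have "(\<lambda>n. norm (T (x (r n))) + g (r n) (y - T (x (r n)))) \<longlonglongrightarrow> norm T + 0"
      by (intro tendsto_intros rxl d0)
    then show ?thesis using e by simp
  qed
  define \<Phi> where "\<Phi> \<phi> = F0 (rk \<phi> y) / norm T" for \<phi> :: "'a \<Rightarrow>\<^sub>L real"
  have phil: "(\<lambda>n. \<phi> (x (r n))) \<longlonglongrightarrow> \<Phi> \<phi>" for \<phi> :: "'a \<Rightarrow>\<^sub>L real"
  proof -
    have "(\<lambda>n. g (r n) (rk \<phi> y (x (r n)))) \<longlonglongrightarrow> F0 (rk \<phi> y)"
      using LIMSEQ_subseq_LIMSEQ[OF Fconv[OF rk_K] r(1)] by (simp add: comp_def)
    moreover have "g (r n) (rk \<phi> y (x (r n))) = \<phi> (x (r n)) * g (r n) y" for n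
      using supp_parts(2)[OF g] by simp
    ultimately have p: "(\<lambda>n. \<phi> (x (r n)) * g (r n) y) \<longlonglongrightarrow> F0 (rk \<phi> y)" by simp
    have "(\<lambda>n. (\<phi> (x (r n)) * g (r n) y) / g (r n) y) \<longlonglongrightarrow> F0 (rk \<phi> y) / norm T"
      using tendsto_divide[OF p gy] nT by simp
    moreover have "\<forall>\<^sub>F n in sequentially. 0 < g (r n) y" using order_tendstoD(1)[OF gy nT] .
    then have "\<forall>\<^sub>F n in sequentially. (\<phi> (x (r n)) * g (r n) y) / g (r n) y = \<phi> (x (r n))"
      by (rule eventually_mono) simp
    ultimately show ?thesis unfolding \<Phi>_def by (rule Lim_transform_eventually)
  qed
  have bl: "bounded_linear \<Phi>"
  proof (rule bounded_linear_intro[where K=1])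
    fix \<phi>1 \<phi>2 :: "'a \<Rightarrow>\<^sub>L real"
    have "(\<lambda>n. (\<phi>1 + \<phi>2) (x (r n))) \<longlonglongrightarrow> \<Phi> \<phi>1 + \<Phi> \<phi>2"
      using tendsto_add[OF phil[of \<phi>1] phil[of \<phi>2]] by (simp add: plus_blinfun.rep_eq)
    then show "\<Phi> (\<phi>1 + \<phi>2) = \<Phi> \<phi>1 + \<Phi> \<phi>2" using LIMSEQ_unique phil by blast
  next
    fix c :: real and \<phi> :: "'a \<Rightarrow>\<^sub>L real"
    have "(\<lambda>n. (c *\<^sub>R \<phi>) (x (r n))) \<longlonglongrightarrow> c *\<^sub>R \<Phi> \<phi>"
      using tendsto_scaleR[OF tendsto_const phil[of \<phi>]] by (simp add: scaleR_blinfun.rep_eq)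
    then show "\<Phi> (c *\<^sub>R \<phi>) = c *\<^sub>R \<Phi> \<phi>" using LIMSEQ_unique phil by blast
  next
    fix \<phi> :: "'a \<Rightarrow>\<^sub>L real"
    have "norm (\<phi> (x (r n))) \<le> norm \<phi>" for n using norm_blinfun[of \<phi> "x (r n)"] xu by simp
    then show "norm (\<Phi> \<phi>) \<le> norm \<phi> * 1"
      using LIMSEQ_le_const2[OF tendsto_norm[OF phil[of \<phi>]]] by auto
  qed
  obtain x0 where x0: "\<forall>\<phi>. blinfun_apply (Blinfun \<Phi>) \<phi> = \<phi> x0"
    using refl unfolding reflexive_space_def by blast
  have Phx: "\<Phi> \<phi> = \<phi> x0" for \<phi> :: "'a \<Rightarrow>\<^sub>L real" using x0 bounded_linear_Blinfun_apply[OF bl] by metis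
  have wk: "(\<lambda>n. \<phi> (x (r n))) \<longlonglongrightarrow> \<phi> x0" for \<phi> :: "'a \<Rightarrow>\<^sub>L real" using phil Phx by metis
  have Tx0: "T x0 = y"
  proof (rule SEP, intro allI)
    fix h :: "'b \<Rightarrow>\<^sub>L real"
    have "(\<lambda>n. (h o\<^sub>L T) (x (r n))) \<longlonglongrightarrow> (h o\<^sub>L T) x0" by (rule wk)
    then have a: "(\<lambda>n. h (T (x (r n)))) \<longlonglongrightarrow> h (T x0)" by (simp add: blinfun_compose.rep_eq)
    have b: "(\<lambda>n. h (T (x (r n)))) \<longlonglongrightarrow> h y"
      by (rule bounded_linear.tendsto[OF blinfun.bounded_linear_right ry])
    show "h (T x0) = h y" using LIMSEQ_unique[OF a b] .
  qed
  have ge: "1 \<le> norm x0"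
  proof -
    have "norm T \<le> norm T * norm x0" using norm_blinfun[of T x0] Tx0 ny by simp
    then show ?thesis using nT by simp
  qed
  have le: "norm x0 \<le> 1"
  proof -
    obtain h :: "'a \<Rightarrow>\<^sub>L real" where h: "h x0 = norm x0" "\<forall>u. \<bar>h u\<bar> \<le> norm u" using norming by blast
    have "h (x (r n)) \<le> 1" for n using h(2) xu[of "r n"] by (metis abs_le_D1)
    then have "h x0 \<le> 1" using LIMSEQ_le_const2[OF wk[of h]] by blast
    then show ?thesis using h(1) by simp
  qed
  have nx0: "norm x0 = 1" using ge le by simp
  have "(\<lambda>n. norm ((x \<circ> r) n - x0)) \<longlonglongrightarrow> 0"
  proof -
    have "weak_conv (x \<circ> r) x0" unfolding weak_conv_def using wk by (simp add: comp_def)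
    moreover have "(\<lambda>n. norm ((x \<circ> r) n)) \<longlonglongrightarrow> norm x0" using xu nx0 by simp
    ultimately show ?thesis using kk unfolding kadets_klee_def by blast
  qed
  then have "(\<lambda>n. (x \<circ> r) n - x0) \<longlonglongrightarrow> 0" by (simp add: tendsto_norm_zero_iff)
  then have "(x \<circ> r) \<longlonglongrightarrow> x0" using LIM_zero_iff[of "x \<circ> r" x0 sequentially] by simp
  moreover have "norm (T x0) = norm T" using Tx0 ny by simp
  ultimately show ?thesis using r(1) nx0 by blast
qed

lemma UNQ:
  fixes T :: "'a::real_normed_vector \<Rightarrow>\<^sub>L 'b::real_normed_vector"
  assumes T0: "T \<noteq> 0" and smT: "smooth_point_in compact_ops T"
    and x0: "norm x0 = 1" "norm (T x0) = norm T" and x1: "norm x1 = 1" "norm (T x1) = norm T"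
  shows "x1 = x0 \<or> x1 = - x0"
proof -
  have nT: "norm T > 0" using T0 by simp
  obtain g0 where g0: "support_functional_on UNIV (T x0) g0" using supp_exists[OF lsub_UNIV] by blast
  obtain g1 where g1: "support_functional_on UNIV (T x1) g1" using supp_exists[OF lsub_UNIV] by blast
  have F0: "support_functional_on compact_ops T (\<lambda>S. g0 (S x0))" by (rule suppK[OF x0 g0])
  have F1: "support_functional_on compact_ops T (\<lambda>S. g1 (S x1))" by (rule suppK[OF x1 g1])
  have eq: "\<forall>S\<in>compact_ops. g0 (S x0) = g1 (S x1)"
    using smT F0 F1 unfolding smooth_point_in_def by blast
  define c where "c = g1 (T x0) / norm T"
  have "\<forall>h::'a \<Rightarrow>\<^sub>L real. h x0 = h (c *\<^sub>R x1)"
  proof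
    fix h :: "'a \<Rightarrow>\<^sub>L real"
    have "g0 (rk h (T x0) x0) = g1 (rk h (T x0) x1)" using eq rk_K by blast
    then have "h x0 * g0 (T x0) = h x1 * g1 (T x0)" using supp_parts(2)[OF g0] supp_parts(2)[OF g1] by simp
    then have "h x0 * norm T = h x1 * g1 (T x0)" using supp_parts(4)[OF g0] x0(2) by simp
    then have "h x0 = c * h x1" unfolding c_def using nT by (simp add: field_simps)
    then show "h x0 = h (c *\<^sub>R x1)" by (simp add: blinfun.scaleR_right)
  qed
  then have x0c: "x0 = c *\<^sub>R x1" by (rule SEP)
  then have "\<bar>c\<bar> = 1" using x0(1) x1(1) by simp
  then have "c = 1 \<or> c = -1" by auto
  then show ?thesis using x0c by auto
qed

lemma only_if:
  fixes T :: "'a::real_normed_vector \<Rightarrow>\<^sub>L 'b::real_normed_vector"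
  assumes refl: "reflexive_space TYPE('a)" and kk: "kadets_klee TYPE('a)"
    and TK: "T \<in> compact_ops" and T0: "T \<noteq> 0" and smT: "smooth_point_in compact_ops T"
  shows "\<exists>x0. norm x0 = 1 \<and> (\<forall>\<epsilon>>0. \<exists>d>0. \<forall>\<delta>. 0 < \<delta> \<and> \<delta> \<le> d \<and> \<delta> < norm T \<longrightarrow>
                  M_set T \<delta> \<subseteq> ball x0 \<epsilon> \<union> ball (- x0) \<epsilon>)"
proof -
  obtain v where v: "T v \<noteq> 0" using T0 blinfun_eqI[of T 0] by auto
  then have vn: "v \<noteq> 0" by auto
  have "\<forall>n. \<exists>x. norm x = 1 \<and> norm (T x) > norm T - inverse (real (Suc n))"
  proof
    fix n
    have "0 < inverse (real (Suc n))" by simp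
    then show "\<exists>x. norm x = 1 \<and> norm (T x) > norm T - inverse (real (Suc n))" using approx[OF _ vn] by blast
  qed
  then obtain x where x: "\<And>n. norm (x n) = 1" "\<And>n. norm (T (x n)) > norm T - inverse (real (Suc n))"
    by metis
  obtain r x0 where x0: "norm x0 = 1" "norm (T x0) = norm T"
    using CONV[OF refl kk TK T0 smT x(1) norm_seq[OF x]] by blast
  have "\<forall>\<epsilon>>0. \<exists>d>0. \<forall>\<delta>. 0 < \<delta> \<and> \<delta> \<le> d \<and> \<delta> < norm T \<longrightarrow> M_set T \<delta> \<subseteq> ball x0 \<epsilon> \<union> ball (- x0) \<epsilon>"
  proof (intro allI impI, rule ccontr)
    fix e :: real assume e: "e > 0"
    assume ne: "\<not> (\<exists>d>0. \<forall>\<delta>. 0 < \<delta> \<and> \<delta> \<le> d \<and> \<delta> < norm T \<longrightarrow> M_set T \<delta> \<subseteq> ball x0 e \<union> ball (- x0) e)"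
    have "\<forall>n. \<exists>z. norm z = 1 \<and> norm (T z) > norm T - inverse (real (Suc n)) \<and> z \<notin> ball x0 e \<union> ball (- x0) e"
    proof
      fix n
      have "inverse (real (Suc n)) > 0" by simp
      then obtain \<delta> where dl: "0 < \<delta>" "\<delta> \<le> inverse (real (Suc n))" "\<delta> < norm T"
          "\<not> M_set T \<delta> \<subseteq> ball x0 e \<union> ball (- x0) e" using ne by blast
      then obtain z where z: "z \<in> M_set T \<delta>" "z \<notin> ball x0 e \<union> ball (- x0) e" by blast
      then have "norm z = 1" "norm (T z) > norm T - \<delta>" unfolding M_set_def by auto
      then show "\<exists>z. norm z = 1 \<and> norm (T z) > norm T - inverse (real (Suc n)) \<and> z \<notin> ball x0 e \<union> ball (- x0) e"
        using z(2) dl(2) by (intro exI[of _ z]) auto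
    qed
    then obtain z where z: "\<And>n. norm (z n) = 1" "\<And>n. norm (T (z n)) > norm T - inverse (real (Suc n))"
      "\<And>n. z n \<notin> ball x0 e \<union> ball (- x0) e" by metis
    obtain r x1 where r: "strict_mono r" "norm x1 = 1" "norm (T x1) = norm T" "(z \<circ> r) \<longlonglongrightarrow> x1"
      using CONV[OF refl kk TK T0 smT z(1) norm_seq[OF z(1,2)]] by blast
    have x1: "x1 = x0 \<or> x1 = - x0" using UNQ[OF T0 smT x0 r(2,3)] .
    have "\<forall>\<^sub>F n in sequentially. dist ((z \<circ> r) n) x1 < e" using tendstoD[OF r(4) e] .
    then obtain N where "\<forall>n\<ge>N. dist ((z \<circ> r) n) x1 < e" unfolding eventually_sequentially by blast
    then obtain n where "dist ((z \<circ> r) n) x1 < e" by blast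
    then have "z (r n) \<in> ball x1 e" by (simp add: dist_commute)
    then show False using x1 z(3)[of "r n"] by auto
  qed
  then show ?thesis using x0(1) by blast
qed


theorem theorem2p3:
  fixes T :: "'a::banach \<Rightarrow>\<^sub>L 'b::banach"
  assumes "reflexive_space TYPE('a)"
    and "smooth_space TYPE('b)"
    and "dim_gt_one TYPE('a)" and "dim_gt_one TYPE('b)"
    and "T \<in> compact_ops" and "T \<noteq> 0"
  shows "(kadets_klee TYPE('a) \<longrightarrow>
            (smooth_point_in compact_ops T \<longleftrightarrow>
              (\<exists>x0. norm x0 = 1 \<and> (\<forall>\<epsilon>>0. \<exists>d>0. \<forall>\<delta>. 0 < \<delta> \<and> \<delta> \<le> d \<and> \<delta> < norm T \<longrightarrow>
                  M_set T \<delta> \<subseteq> ball x0 \<epsilon> \<union> ball (- x0) \<epsilon>))))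
       \<and> ((\<exists>x0. norm x0 = 1 \<and> (\<forall>\<epsilon>>0. \<exists>d>0. \<forall>\<delta>. 0 < \<delta> \<and> \<delta> \<le> d \<and> \<delta> < norm T \<longrightarrow>
                  M_set T \<delta> \<subseteq> ball x0 \<epsilon> \<union> ball (- x0) \<epsilon>))
            \<longrightarrow> smooth_point_in compact_ops T)"
proof -
  have ifd: "(\<exists>x0. norm x0 = 1 \<and> (\<forall>\<epsilon>>0. \<exists>d>0. \<forall>\<delta>. 0 < \<delta> \<and> \<delta> \<le> d \<and> \<delta> < norm T \<longrightarrow>
                  M_set T \<delta> \<subseteq> ball x0 \<epsilon> \<union> ball (- x0) \<epsilon>))
            \<longrightarrow> smooth_point_in compact_ops T"
    using if_dir[OF assms(2) assms(5) assms(6)] by blast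
  moreover have "kadets_klee TYPE('a) \<longrightarrow> smooth_point_in compact_ops T \<longrightarrow>
              (\<exists>x0. norm x0 = 1 \<and> (\<forall>\<epsilon>>0. \<exists>d>0. \<forall>\<delta>. 0 < \<delta> \<and> \<delta> \<le> d \<and> \<delta> < norm T \<longrightarrow>
                  M_set T \<delta> \<subseteq> ball x0 \<epsilon> \<union> ball (- x0) \<epsilon>))"
    using only_if[OF assms(1) _ assms(5) assms(6)] by blast
  ultimately show ?thesis by blast
qed

end
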